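(* Let $c\ge\lceil(2n-1)/3\rceil$ and let $\mathbf{s}_n\in\mathcal{B}(n,c,d_1)$ with $d_1=n-c$ and $add(\mathbf{s}_n)=t_1$. If there exists an integer $0<b<n$ such that $R^b(\mathbf{s}_n)\in\mathcal{B}(n,c,d_2)$ and $add(R^b(\mathbf{s}_n))=t_2\ge t_1$, then $b=d_2$.
   Context: All sequences are binary (entries in $\mathbb{Z}_2$), $\overline{x}=x\oplus1$, $x\bmod d$ is the least nonnegative residue, and $\mathbf{a}^q$ is the concatenation of $q$ copies of $\mathbf a$. For $\mathbf{s}_n=(s_0,\dots,s_{n-1})$, $\mathbf{s}_j=(s_0,\dots,s_{j-1})$. A length-$m$ sequence is periodic if it is the concatenation of $m/e$ copies of a length-$e$ sequence for a proper divisor $e$ of $m$, aperiodic otherwise. Right circular shift: $R^k(\mathbf{s}_n)=(s_{n-k},\dots,s_{n-1},s_0,\dots,s_{n-k-1})$. For $c\ge\lfloor n/2\rfloor$ and $1\le d\le\min\{n-c,\lfloor n/2\rfloor\}$, $\mathcal{B}(n,c,d)$ is the set of aperiodic length-$n$ sequences $\mathbf{s}_n$ with $\mathbf{s}_d$ aperiodic and $\mathbf{s}_{c+d}=(s_0,\dots,s_{d-1})^q(s_0,\dots,s_{r-1},\overline{s_r})$, where $q=\lfloor(c+d-1)/d\rfloor$, $r=c+d-1-qd$, and $s_{c+d},\dots,s_{n-1}$ are arbitrary. For $\mathbf{s}_n\in\mathcal{B}(n,c,d)$, $add(\mathbf{s}_n)$ is the integer $t\ge0$ such that $s_{n-1-i}=s_{(d-1-i)\bmod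 d}$ for $0\le i<t$ and $s_{n-1-t}\neq s_{(d-1-t)\bmod d}$. *)

theory Defs
  imports Complex_Main
begin

text \<open>Binary sequences are modelled as bool lists (True = 1, False = 0; complement = Not).
  Index i of the list is the entry s_i.\<close>

definition periodic :: "bool list \<Rightarrow> bool" where
  "periodic xs \<longleftrightarrow> (\<exists>e. 0 < e \<and> e < length xs \<and> e dvd length xs \<and>
       xs = concat (replicate (length xs div e) (take e xs)))"

definition aperiodic :: "bool list \<Rightarrow> bool" where
  "aperiodic xs \<longleftrightarrow> \<not> periodic xs"

text \<open>The set B(n,c,d); it is only defined for c \<ge> floor(n/2), 1 \<le> d \<le> min(n-c, floor(n/2)),
  so these parameter constraints are part of membership.\<close>
definition B_set :: "nat \<Rightarrow> nat \<Rightarrow> nat \<Rightarrow> bool list set" where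
  "B_set n c d = {s. n div 2 \<le> c \<and> 1 \<le> d \<and> d \<le> min (n - c) (n div 2) \<and>
      length s = n \<and> aperiodic s \<and> aperiodic (take d s) \<and>
      take (c + d) s = concat (replicate ((c + d - 1) div d) (take d s)) @
        take (c + d - 1 - ((c + d - 1) div d) * d) s @
        [\<not> s ! (c + d - 1 - ((c + d - 1) div d) * d)]}"

definition is_add :: "nat \<Rightarrow> nat \<Rightarrow> bool list \<Rightarrow> nat \<Rightarrow> bool" where
  "is_add n d s t \<longleftrightarrow> t < n \<and>
     (\<forall>i<t. s ! (n - 1 - i) = s ! nat ((int d - 1 - int i) mod int d)) \<and>
     s ! (n - 1 - t) \<noteq> s ! nat ((int d - 1 - int t) mod int d)"

definition rshift :: "nat \<Rightarrow> bool list \<Rightarrow> bool list" where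
  "rshift k s = drop (length s - k) s @ take (length s - k) s"

end

theory Submission
  imports Defs
begin


lemma period_mod:
  fixes p L k :: nat and F :: "nat \<Rightarrow> 'a"
  assumes p0: "0 < p" and P: "\<And>k. k + p < L \<Longrightarrow> F k = F (k + p)"
  shows "k < L \<Longrightarrow> F k = F (k mod p)"
proof (induction k rule: less_induct)
  case (less k)
  show ?case
  proof (cases "k < p")
    case True then show ?thesis by simp
  next
    case False
    then have "F (k - p) = F k" using P[of "k - p"] less.prems by simp
    moreover have "F (k - p) = F ((k - p) mod p)" using less.IH[of "k-p"] less.prems p0 False by simp
    moreover have "(k - p) mod p = k mod p" using False by (simp add: mod_if)
    ultimately show ?thesis by simp
  qed
qed

lemma fine_wilf_aux:
  fixes N :: nat and F :: "nat \<Rightarrow> 'a"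
  shows "\<forall>p q L. p + q = N \<longrightarrow> 0 < p \<longrightarrow> 0 < q \<longrightarrow> p \<le> q \<longrightarrow> p + q \<le> L + gcd p q \<longrightarrow>
     (\<forall>k. k + p < L \<longrightarrow> F k = F (k + p)) \<longrightarrow> (\<forall>k. k + q < L \<longrightarrow> F k = F (k + q)) \<longrightarrow>
     (\<forall>k<L. F k = F (k mod gcd p q))"
proof (induction N rule: less_induct)
  case (less N)
  show ?case
  proof (intro allI impI)
    fix p q L k
    assume N: "p + q = N" and p0: "0 < p" and q0: "0 < q" and pq: "p \<le> q"
      and Lg: "p + q \<le> L + gcd p q"
      and Pp: "\<forall>k. k + p < L \<longrightarrow> F k = F (k + p)" and Pq: "\<forall>k. k + q < L \<longrightarrow> F k = F (k + q)"
      and kL: "k < L"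
    show "F k = F (k mod gcd p q)"
    proof (cases "p = q")
      case True
      then show ?thesis using period_mod[of p L F k] p0 Pp kL by simp
    next
      case False
      then have pq': "p < q" using pq by simp
      define g where "g = gcd p q"
      have gg: "gcd p (q - p) = g" unfolding g_def using pq
        by (metis gcd.commute gcd_diff1_nat)
      have gdvd: "g dvd q - p" using gg by (metis gcd_dvd2)
      have gle: "g \<le> q - p" using gdvd pq' by (simp add: dvd_imp_le)
      have gp: "g dvd p" unfolding g_def by simp
      have L2p: "2 * p \<le> L" using Lg gle pq' unfolding g_def by linarith
      have IH: "\<forall>k<L - p. F k = F (k mod gcd p (q - p))"
      proof -
        have A: "\<forall>k. k + p < L - p \<longrightarrow> F k = F (k + p)" using Pp by auto
        have B: "\<forall>k. k + (q - p) < L - p \<longrightarrow> F k = F (k + (q - p))"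
        proof (intro allI impI)
          fix k assume h: "k + (q - p) < L - p"
          have "F k = F (k + q)" using Pq h pq' by auto
          moreover have "F (k + (q - p)) = F (k + (q - p) + p)" using Pp h pq' by auto
          ultimately show "F k = F (k + (q - p))" using pq' by simp
        qed
        have qN: "q < N" using N p0 by simp
        have L': "p + (q - p) \<le> L - p + gcd p (q - p)" using Lg gg pq' unfolding g_def by simp
        show ?thesis
        proof (cases "p \<le> q - p")
          case True
          show ?thesis
          proof (intro allI impI)
            fix k assume kk: "k < L - p"
            have e1: "p + (q - p) = q" using pq' by simp
            have e2: "0 < q - p" using pq' by simp
            show "F k = F (k mod gcd p (q - p))"
              by (rule less.IH[OF qN, rule_format, of p "q - p" "L - p" k, OF e1 p0 e2 True L' A[rule_format] B[rule_format] kk])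
          qed
        next
          case False
          have L'': "(q - p) + p \<le> L - p + gcd (q - p) p" using L' by (simp add: gcd.commute)
          show ?thesis
          proof (intro allI impI)
            fix k assume kk: "k < L - p"
            have e1: "(q - p) + p = q" using pq' by simp
            have e2: "0 < q - p" using pq' by simp
            have e3: "q - p \<le> p" using False by simp
            have B': "\<And>k. k + p < L - p \<Longrightarrow> F k = F (k + p)" using A by blast
            have A': "\<And>k. k + (q - p) < L - p \<Longrightarrow> F k = F (k + (q - p))" using B by blast
            have "F k = F (k mod gcd (q - p) p)"
              by (rule less.IH[OF qN, rule_format, of "q - p" p "L - p" k, OF e1 e2 p0 e3 L'' A' B' kk])
            then show "F k = F (k mod gcd p (q - p))" by (simp add: gcd.commute)
          qed
        qed
      qed
      have "F k = F (k mod p)" using period_mod[of p L F k] p0 Pp kL by simp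
      also have "\<dots> = F (k mod p mod g)"
      proof -
        have "k mod p < p" using p0 by simp
        then have "k mod p < L - p" using L2p by linarith
        then show ?thesis using IH gg by simp
      qed
      also have "k mod p mod g = k mod g" using gp by (simp add: mod_mod_cancel)
      finally show ?thesis unfolding g_def .
    qed
  qed
qed

lemma fine_wilf:
  fixes p q L k :: nat and F :: "nat \<Rightarrow> 'a"
  assumes "0 < p" "0 < q" "p + q \<le> L + gcd p q"
    "\<And>k. k + p < L \<Longrightarrow> F k = F (k + p)" "\<And>k. k + q < L \<Longrightarrow> F k = F (k + q)" "k < L"
  shows "F k = F (k mod gcd p q)"
proof (cases "p \<le> q")
  case True
  show ?thesis
    by (rule fine_wilf_aux[of "p+q" F, rule_format, of p q L k, OF refl assms(1) assms(2) True assms(3) assms(4) assms(5) assms(6)])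
next
  case False
  have "F k = F (k mod gcd q p)"
  proof (rule fine_wilf_aux[of "q+p" F, rule_format, of q p L k, OF refl assms(2) assms(1)])
    show "q \<le> p" using False by simp
    show "q + p \<le> L + gcd q p" using assms(3) by (simp add: gcd.commute add.commute)
  qed (use assms in auto)
  then show ?thesis by (simp add: gcd.commute)
qed



lemma core:
  fixes S :: "nat \<Rightarrow> bool" and n c D p a :: nat
  assumes n3: "3 \<le> n" and nD: "n = c + D" and p1: "1 \<le> p" and pD: "p \<le> D"
    and cb: "2 * n \<le> 3 * c + 1"
    and a1: "1 \<le> a" and an: "a < n"
    and per: "\<And>i. S (i + n) = S i"
    and S1: "\<And>i. i + D < n - 1 \<Longrightarrow> S i = S (i + D)"
    and S2: "S (n - 1) \<noteq> S (n - 1 - D)"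
    and U1: "\<And>j. j < c - 1 \<Longrightarrow> S (a + j) = S (a + j + p)"
    and U2: "S (a + c + p - 1) \<noteq> S (a + c - 1)"
    and prim: "\<And>g. 0 < g \<Longrightarrow> g < D \<Longrightarrow> g dvd D \<Longrightarrow> \<exists>i<D. S i \<noteq> S (i mod g)"
  shows "a + p = n"
proof -
  have D1: "1 \<le> D" using p1 pD by simp
  have c2: "2 * D \<le> c + 1" using cb nD by simp
  have c3: "D + 1 \<le> c" using c2 n3 nD by linarith
  have perk: "\<And>k. n \<le> k \<Longrightarrow> S k = S (k - n)" using per by (metis le_add_diff_inverse2)
  consider (Ia) "a + p < D" | (Ib) "a + p = D" | (C) "D < a + p" by linarith
  then show ?thesis
  proof cases
    case Ia
    have e1: "S (a + c - 1 - D) = S (a + c - 1)"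
      using S1[of "a + c - 1 - D"] c3 Ia nD by simp
    have e2: "S (a + (c - 1 - D)) = S (a + (c - 1 - D) + p)"
      using U1[of "c - 1 - D"] D1 c3 by simp
    have e3: "S (a + c - 1 - D + p) = S (a + c - 1 - D + p + D)"
      using S1[of "a + c - 1 - D + p"] c3 Ia nD by simp
    have "a + (c - 1 - D) = a + c - 1 - D" using c3 by simp
    moreover have "a + c - 1 - D + p + D = a + c + p - 1" using c3 by simp
    ultimately have "S (a + c - 1) = S (a + c + p - 1)" using e1 e2 e3 by simp
    then show ?thesis using U2 by simp
  next
    case Ib
    define F where "F k = S (a + k)" for k
    define g where "g = gcd p D"
    define L where "L = c + p - 1"
    have Fp: "\<And>k. k + p < L \<Longrightarrow> F k = F (k + p)"
      unfolding F_def L_def using U1 by (simp add: add.assoc)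
    have FD: "\<And>k. k + D < L \<Longrightarrow> F k = F (k + D)"
    proof -
      fix k assume "k + D < L"
      then have "a + k + D < n - 1" unfolding L_def using Ib nD by linarith
      then show "F k = F (k + D)" unfolding F_def using S1[of "a + k"] by (simp add: add.assoc)
    qed
    have g0: "0 < g" unfolding g_def using p1 by simp
    have gle: "g \<le> p" unfolding g_def using p1 by (simp add: gcd_le1_nat)
    have Lg: "p + D \<le> L + gcd p D" unfolding L_def using c3 g0 g_def by linarith
    have FW: "\<And>k. k < L \<Longrightarrow> F k = F (k mod g)"
      unfolding g_def using fine_wilf[of p D L F] p1 D1 Lg Fp FD by simp
    have key: "\<And>i. i < D \<Longrightarrow> S i = S (i mod g)"
    proof -
      fix i assume iD: "i < D"
      have "S i = S (i + D)" using S1[of i] iD c3 nD by simp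
      also have "\<dots> = F (i + p)"
      proof -
        have "i + D = a + (i + p)" using Ib by (simp add: algebra_simps)
        then show ?thesis unfolding F_def by (rule arg_cong)
      qed
      also have "\<dots> = F ((i + p) mod g)" using FW[of "i + p"] iD c3 unfolding L_def by simp
      also have "\<dots> = F ((i mod g + p) mod g)" by (simp add: mod_add_left_eq)
      also have "\<dots> = F (i mod g + p)"
      proof -
        have "i mod g < g" using g0 by simp
        then have "i mod g + p < L" unfolding L_def using gle c3 iD pD by linarith
        then show ?thesis using FW by simp
      qed
      also have "\<dots> = S (i mod g + D)"
      proof -
        have "i mod g + D = a + (i mod g + p)" using Ib by (simp add: algebra_simps)
        then show ?thesis unfolding F_def by (rule arg_cong[symmetric])
      qed
      also have "\<dots> = S (i mod g)"
      proof -
        have "i mod g < D" using iD by (meson le_less_trans mod_less_eq_dividend)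
        then show ?thesis using S1[of "i mod g"] c3 nD by simp
      qed
      finally show "S i = S (i mod g)" .
    qed
    have gD: "g dvd D" unfolding g_def by simp
    show ?thesis
    proof (cases "g < D")
      case True
      then show ?thesis using prim[OF g0 True gD] key by blast
    next
      case False
      then have "g = D" using gD D1 by (simp add: dvd_imp_le le_antisym)
      then have "D dvd p" unfolding g_def by (metis gcd_dvd1)
      then have "D \<le> p" using p1 by (simp add: dvd_imp_le)
      then show ?thesis using Ib pD a1 by simp
    qed
  next
    case C
    define e where "e = n - 1 - a"
    have ae: "a + e = n - 1" unfolding e_def using an by simp
    have ebound: "e \<le> c + p - 2" unfolding e_def using C nD an by linarith
    consider (goal) "e = p - 1" | (C2) "e + 2 \<le> p" | (C1) "p \<le> e" "e \<le> c - 1" | (C3) "c \<le> e"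
      by linarith
    then show ?thesis
    proof cases
      case goal
      then show ?thesis using n3 p1 nD ae p1 n3 by linarith
    next
      case C2
      define l where "l = c - 2 - e"
      have lc: "l + e + 2 = c" unfolding l_def using C2 c3 pD by linarith
      have brk: "S (l + p) \<noteq> S l"
      proof -
        have "a + c + p - 1 = (l + p) + n" using n3 p1 nD ae lc by linarith
        moreover have "a + c - 1 = l + n" using n3 p1 nD ae lc by linarith
        ultimately show ?thesis using U2 per by metis
      qed
      have Brel: "\<And>k. k < l \<Longrightarrow> S k = S (k + p)"
      proof -
        fix k assume kl: "k < l"
        have "S (a + (k + e + 1)) = S (a + (k + e + 1) + p)" using U1[of "k + e + 1"] kl lc by linarith
        moreover have "a + (k + e + 1) = k + n" using n3 p1 nD ae an by linarith
        moreover have "a + (k + e + 1) + p = (k + p) + n" using n3 p1 nD ae an by linarith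
        ultimately show "S k = S (k + p)" using per by metis
      qed
      show ?thesis
      proof (cases "p = D")
        case True
        have "S l = S (l + D)" using S1[of l] lc nD by linarith
        then show ?thesis using brk True by simp
      next
        case False
        have lD: "D \<le> l" using lc C2 c2 pD False by linarith
        have "S (l - D) = S l" using S1[of "l - D"] lD lc nD by simp
        moreover have "S (l - D) = S (l - D + p)" using Brel[of "l - D"] lD D1 by simp
        moreover have "S (l - D + p) = S (l + p)"
          using S1[of "l - D + p"] lD lc nD pD C2 by (simp add: algebra_simps)
        ultimately show ?thesis using brk by simp
      qed
    next
      case C1
      define W where "W j = S (a + j)" for j
      define L where "L = c + p - 1"
      have Wp: "\<And>j. j < L \<Longrightarrow> W j = W (j mod p)"
        using period_mod[of p L W] p1 U1 unfolding W_def L_def by (simp add: add.assoc)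
      have cross: "\<And>r. r < p - 1 \<Longrightarrow> W r = W (r + c)"
      proof -
        fix r assume rp: "r < p - 1"
        define i where "i = r + c - 1 - e"
        have hi: "i + D < n - 1" unfolding i_def using rp C1 nD by linarith
        have "S i = S (i + D)" using S1[OF hi] .
        moreover have "a + (r + c) = i + n" unfolding i_def using n3 p1 nD ae C1 c3 by linarith
        moreover have "a + r = i + D" unfolding i_def using n3 p1 nD ae C1 c3 nD by linarith
        ultimately show "W r = W (r + c)" unfolding W_def using per by metis
      qed
      have brk: "W (c - 1) \<noteq> W (p - 1)"
      proof -
        define lb where "lb = c + p - 2 - e"
        have "a + c + p - 1 = lb + n" unfolding lb_def using n3 p1 nD ae C1 c3 by linarith
        then have "S (a + c + p - 1) = S lb" using per by metis
        also have "\<dots> = S (lb + D)"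
        proof -
          have "lb + D < n - 1" unfolding lb_def using C1 nD p1 by linarith
          then show ?thesis using S1 by simp
        qed
        also have "lb + D = a + (p - 1)" unfolding lb_def using n3 p1 nD ae C1 c3 nD p1 by linarith
        finally have "S (a + c + p - 1) = W (p - 1)" unfolding W_def .
        moreover have "a + c - 1 = a + (c - 1)" using c3 by simp
        ultimately show ?thesis using U2 unfolding W_def by metis
      qed
      define f where "f r = W r" for r
      have frel: "\<And>r. r < p - 1 \<Longrightarrow> f r = f ((r + c) mod p)"
      proof -
        fix r assume rp: "r < p - 1"
        have "r + c < L" unfolding L_def using rp by linarith
        then show "f r = f ((r + c) mod p)" unfolding f_def using cross[OF rp] Wp by simp
      qed
      define rr where "rr k = (k * c + p - 1) mod p" for k
      have rr_step: "rr (Suc k) = (rr k + c) mod p" for k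
      proof -
        have "Suc k * c + p - 1 = (k * c + p - 1) + c" using p1 by simp
        then have "rr (Suc k) = ((k * c + p - 1) + c) mod p" unfolding rr_def by simp
        also have "\<dots> = (rr k + c) mod p" unfolding rr_def by (simp add: mod_add_left_eq)
        finally show ?thesis .
      qed
      have r1: "f (rr 1) \<noteq> f (p - 1)"
      proof -
        have "c - 1 < L" unfolding L_def using p1 c3 by linarith
        then have "W (c - 1) = W ((c - 1) mod p)" using Wp by simp
        moreover have "(c - 1) mod p = rr 1"
        proof -
          have "1 * c + p - 1 = (c - 1) + p" using c3 p1 by simp
          then show ?thesis unfolding rr_def by simp
        qed
        moreover have "p - 1 < L" unfolding L_def using c3 p1 by linarith
        ultimately show ?thesis using brk Wp unfolding f_def by simp
      qed
      have all: "\<And>k. 1 \<le> k \<Longrightarrow> f (rr k) = f (rr 1)"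
      proof -
        fix k :: nat assume "1 \<le> k"
        then show "f (rr k) = f (rr 1)"
        proof (induction k rule: dec_induct)
          case base then show ?case by simp
        next
          case (step k)
          have "rr k < p" unfolding rr_def using p1 by simp
          moreover have "rr k \<noteq> p - 1" using step.IH r1 by metis
          ultimately have "rr k < p - 1" by linarith
          then have "f (rr k) = f (rr (Suc k))" using frel rr_step by simp
          then show ?case using step.IH by simp
        qed
      qed
      have "rr p = p - 1"
      proof -
        have "p * c + p - 1 = (p - 1) + c * p" using p1 by (simp add: algebra_simps)
        then have "rr p = ((p - 1) + c * p) mod p" unfolding rr_def by simp
        also have "\<dots> = (p - 1) mod p" by (metis mod_mult_self1 mod_mult_self2 mult.commute)
        also have "\<dots> = p - 1" using p1 by simp
        finally show ?thesis .
      qed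
      then show ?thesis using all[of p] p1 r1 by simp
    next
      case C3
      have ep: "p \<le> e" using C3 c3 pD by linarith
      have "e - p < c - 1" using ebound ep c3 p1 by linarith
      then have h1: "S (a + (e - p)) = S (a + (e - p) + p)" using U1 by simp
      have q1: "S (n - 1 - p) = S (n - 1)"
      proof -
        have "a + (e - p) = n - 1 - p" using ae ep by linarith
        moreover have "a + (e - p) + p = n - 1" using ae ep by linarith
        ultimately show ?thesis using h1 by simp
      qed
      show ?thesis
      proof (cases "p = D")
        case True then show ?thesis using q1 S2 by simp
      next
        case False
        have epD: "p + D \<le> e" using C3 c2 pD False by linarith
        have "e - p - D < c - 1" using ebound epD D1 c3 p1 by linarith
        then have h2: "S (a + (e - p - D)) = S (a + (e - p - D) + p)" using U1 by simp
        have q2: "S (n - 1 - p - D) = S (n - 1 - D)"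
        proof -
          have "a + (e - p - D) = n - 1 - p - D" using n3 p1 nD ae epD by linarith
          moreover have "a + (e - p - D) + p = n - 1 - D" using n3 p1 nD ae epD by linarith
          ultimately show ?thesis using h2 by simp
        qed
        have q3: "S (n - 1 - p - D) = S (n - 1 - p)"
        proof -
          have "n - 1 - p - D + D < n - 1" using p1 epD ae by linarith
          moreover have "n - 1 - p - D + D = n - 1 - p" using epD ae by linarith
          ultimately show ?thesis using S1[of "n - 1 - p - D"] by simp
        qed
        show ?thesis using q1 q2 q3 S2 by simp
      qed
    qed
  qed
qed



lemma nth_concat_replicate:
  "i < m * length ys \<Longrightarrow> concat (replicate m ys) ! i = ys ! (i mod length ys)"
proof (induction m arbitrary: i)
  case 0 then show ?case by simp
next
  case (Suc m)
  show ?case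
  proof (cases "i < length ys")
    case True then show ?thesis by (simp add: nth_append)
  next
    case False
    then have "concat (replicate (Suc m) ys) ! i = concat (replicate m ys) ! (i - length ys)"
      by (simp add: nth_append)
    also have "\<dots> = ys ! ((i - length ys) mod length ys)" using Suc False by simp
    also have "(i - length ys) mod length ys = i mod length ys" using False
      by (simp add: le_mod_geq)
    finally show ?thesis .
  qed
qed

lemma B_facts:
  assumes "s \<in> B_set n c d"
  shows "length s = n" "1 \<le> d" "d \<le> n - c" "n div 2 \<le> c" "d \<le> n div 2" "aperiodic (take d s)"
    "\<And>i. i < c + d - 1 \<Longrightarrow> s ! i = s ! (i mod d)"
    "s ! (c + d - 1) \<noteq> s ! ((c + d - 1) mod d)"
proof -
  note B = assms[unfolded B_set_def, simplified]
  show ls: "length s = n" and d1: "1 \<le> d" and dc: "d \<le> n - c" and "n div 2 \<le> c" and "d \<le> n div 2"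
    and "aperiodic (take d s)" using B by auto
  define q where "q = (c + d - 1) div d"
  define r where "r = (c + d - 1) mod d"
  have rdef: "c + d - 1 - q * d = r" unfolding q_def r_def by (simp add: minus_div_mult_eq_mod)
  have T: "take (c + d) s = concat (replicate q (take d s)) @ take r s @ [\<not> s ! r]"
    using B rdef unfolding q_def by simp
  have cn: "c + d \<le> n" using dc d1 by linarith
  have rd: "r < d" unfolding r_def using d1 by simp
  have ltd: "length (take d s) = d" using ls cn by simp
  have qdr: "q * d + r = c + d - 1" unfolding q_def r_def by simp
  have lc: "length (concat (replicate q (take d s))) = q * d" using ltd by (simp add: length_concat sum_list_replicate)
  have ltr: "length (take r s) = r" using rd cn ls by simp
  show "\<And>i. i < c + d - 1 \<Longrightarrow> s ! i = s ! (i mod d)"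
  proof -
    fix i assume i: "i < c + d - 1"
    have "s ! i = take (c + d) s ! i" using i by simp
    also have "\<dots> = (concat (replicate q (take d s)) @ take r s @ [\<not> s ! r]) ! i" using T by simp
    finally have si: "s ! i = (concat (replicate q (take d s)) @ take r s @ [\<not> s ! r]) ! i" .
    show "s ! i = s ! (i mod d)"
    proof (cases "i < q * d")
      case True
      then have "s ! i = concat (replicate q (take d s)) ! i" using si lc by (simp add: nth_append)
      also have "\<dots> = take d s ! (i mod d)" using nth_concat_replicate[of i q "take d s"] True ltd by simp
      also have "\<dots> = s ! (i mod d)" using d1 by simp
      finally show ?thesis .
    next
      case False
      have x: "i - q * d < r" using i qdr False by linarith
      have y: "i - q * d < length s" using x rd cn ls d1 by linarith
      have "s ! i = take r s ! (i - q * d)" using si lc False x ltr y by (simp add: nth_append)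
      also have "\<dots> = s ! (i - q * d)" using x by simp
      also have "i - q * d = i mod d"
      proof -
        have "i = (i - q * d) + q * d" using False by simp
        then have "i mod d = (i - q * d) mod d" by (metis mod_mult_self1)
        then show ?thesis using x rd by simp
      qed
      finally show ?thesis .
    qed
  qed
  show "s ! (c + d - 1) \<noteq> s ! ((c + d - 1) mod d)"
  proof -
    have "s ! (c + d - 1) = take (c + d) s ! (c + d - 1)" using d1 by simp
    also have "\<dots> = (concat (replicate q (take d s)) @ take r s @ [\<not> s ! r]) ! (q * d + r)"
      using T qdr by simp
    also have "\<dots> = (\<not> s ! r)" using lc ltr by (simp add: nth_append)
    finally show ?thesis unfolding r_def by simp
  qed
qed

lemma rshift_nth:
  assumes "length s = n" "b \<le> n" "j < n"
  shows "rshift b s ! j = s ! ((j + (n - b)) mod n)"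
proof -
  have ld: "length (drop (n - b) s) = b" using assms by simp
  show ?thesis
  proof (cases "j < b")
    case True
    then have "rshift b s ! j = drop (n - b) s ! j" unfolding rshift_def using ld assms(1) by (simp add: nth_append)
    also have "\<dots> = s ! (n - b + j)" using assms True by simp
    also have "n - b + j = (j + (n - b)) mod n" using assms True by simp
    finally show ?thesis .
  next
    case False
    then have "rshift b s ! j = take (n - b) s ! (j - b)" unfolding rshift_def using ld assms(1) by (simp add: nth_append)
    also have "\<dots> = s ! (j - b)" using assms False by simp
    also have "j - b = (j + (n - b)) mod n"
    proof -
      have e: "j + (n - b) = (j - b) + n" using assms False by simp
      have "(j + (n - b)) mod n = ((j - b) + n) mod n" using e by (rule arg_cong)
      also have "\<dots> = (j - b) mod n" by (rule mod_add_self2)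
      also have "\<dots> = j - b" using assms(3) by simp
      finally show ?thesis by (rule sym)
    qed
    finally show ?thesis .
  qed
qed

lemma periodic_of_mod:
  assumes "0 < g" "g < D" "g dvd D" "D \<le> length s" "\<And>i. i < D \<Longrightarrow> s ! i = s ! (i mod g)"
  shows "periodic (take D s)"
  unfolding periodic_def
proof (intro exI conjI)
  show "0 < g" "g < length (take D s)" "g dvd length (take D s)" using assms(1-4) by auto
  show "take D s = concat (replicate (length (take D s) div g) (take g (take D s)))"
  proof (rule nth_equalityI)
    have lt: "length (take g (take D s)) = g" using assms(1-4) by simp
    show "length (take D s) = length (concat (replicate (length (take D s) div g) (take g (take D s))))"
      using assms(1-4) lt by (simp add: length_concat sum_list_replicate)
    fix i assume "i < length (take D s)"
    then have i: "i < D" using assms(1-4) by simp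
    have "concat (replicate (length (take D s) div g) (take g (take D s))) ! i = take g (take D s) ! (i mod g)"
      using nth_concat_replicate[of i "D div g" "take g (take D s)"] lt assms(1-4) i by simp
    also have "\<dots> = s ! (i mod g)" using assms(1-4) by simp
    finally show "take D s ! i = concat (replicate (length (take D s) div g) (take g (take D s))) ! i"
      using assms(5)[OF i] i assms(4) by simp
  qed
qed

theorem corollary1:
  fixes n c d1 d2 b t1 t2 :: nat and s :: "bool list"
  assumes "int c \<ge> \<lceil>(2 * real n - 1) / 3\<rceil>"
    and "d1 = n - c"
    and "s \<in> B_set n c d1"
    and "is_add n d1 s t1"
    and "0 < b" and "b < n"
    and "rshift b s \<in> B_set n c d2"
    and "is_add n d2 (rshift b s) t2"
    and "t2 \<ge> t1"
  shows "b = d2"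
proof -
  define D where "D = d1"
  define p where "p = d2"
  define u where "u = rshift b s"
  note sB = B_facts[OF assms(3)[folded D_def]]
  note uB = B_facts[OF assms(7)[folded p_def u_def]]
  have DD: "D = n - c" using assms(2) D_def by simp
  show ?thesis
  proof (cases "n < 3")
    case True
    then have "n = 2" "b = 1" using assms(5,6) by auto
    then have "p = 1" using uB(2,5) by simp
    then show ?thesis using \<open>b = 1\<close> p_def by simp
  next
    case False
    then have n3: "3 \<le> n" by simp
    have cb: "2 * n \<le> 3 * c + 1"
    proof -
      have "(2 * real n - 1) / 3 \<le> real_of_int (int c)" using assms(1) by (simp add: ceiling_le_iff)
      then have "2 * real n - 1 \<le> 3 * real c" by simp
      then show ?thesis by linarith
    qed
    have D1: "1 \<le> D" using sB(2) .
    have nD: "n = c + D" using DD D1 by linarith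
    have p1: "1 \<le> p" using uB(2) .
    have pD: "p \<le> D" using uB(3) DD by simp
    define S where "S i = s ! (i mod n)" for i
    define a where "a = n - b"
    have ls: "length s = n" using sB(1) .
    have lu: "length u = n" using uB(1) .
    have uS: "\<And>j. j < n \<Longrightarrow> u ! j = S (j + a)"
      unfolding u_def S_def a_def using rshift_nth[OF ls] assms(6) by simp
    have per: "\<And>i. S (i + n) = S i" unfolding S_def by simp
    have sper: "\<And>i. i < n - 1 \<Longrightarrow> s ! i = s ! (i mod D)"
    proof -
      fix i assume "i < n - 1"
      then have "i < c + D - 1" using nD by simp
      then show "s ! i = s ! (i mod D)" by (rule sB(7))
    qed
    have S1: "\<And>i. i + D < n - 1 \<Longrightarrow> S i = S (i + D)"
    proof -
      fix i assume h: "i + D < n - 1"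
      have "S i = s ! i" unfolding S_def using h by simp
      also have "\<dots> = s ! (i mod D)"
      proof -
        have "i < n - 1" using h by linarith
        then show ?thesis by (rule sper)
      qed
      also have "\<dots> = s ! ((i + D) mod D)" by simp
      also have "\<dots> = s ! (i + D)"
      proof -
        have "i + D < n - 1" using h by linarith
        then have "s ! (i + D) = s ! ((i + D) mod D)" by (rule sper)
        then show ?thesis by simp
      qed
      also have "\<dots> = S (i + D)" unfolding S_def using h by simp
      finally show "S i = S (i + D)" .
    qed
    have S2: "S (n - 1) \<noteq> S (n - 1 - D)"
    proof -
      have "S (n - 1) = s ! (n - 1)" unfolding S_def using n3 by simp
      moreover have "s ! (n - 1) \<noteq> s ! ((n - 1) mod D)" using sB(8) nD by simp
      moreover have "S (n - 1 - D) = s ! ((n - 1 - D) mod D)"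
      proof -
        have h: "n - 1 - D < n - 1" using D1 n3 by linarith
        have "S (n - 1 - D) = s ! (n - 1 - D)" unfolding S_def using h by simp
        also have "\<dots> = s ! ((n - 1 - D) mod D)" using h by (rule sper)
        finally show ?thesis .
      qed
      moreover have "(n - 1 - D) mod D = (n - 1) mod D"
      proof -
        have "n - 1 = (n - 1 - D) + D" using nD cb n3 D1 by linarith
        then show ?thesis by (metis mod_add_self2)
      qed
      ultimately show ?thesis by simp
    qed
    have uper: "\<And>j. j < c + p - 1 \<Longrightarrow> u ! j = u ! (j mod p)" by (rule uB(7))
    have U1: "\<And>j. j < c - 1 \<Longrightarrow> S (a + j) = S (a + j + p)"
    proof -
      fix j assume j: "j < c - 1"
      have j1: "j < c + p - 1" using j by linarith
      have j2: "j + p < c + p - 1" using j by linarith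
      have "u ! j = u ! (j mod p)" using j1 by (rule uper)
      moreover have "u ! (j + p) = u ! ((j + p) mod p)" using j2 by (rule uper)
      moreover have "u ! j = S (a + j)" using uS[of j] j nD by (simp add: add.commute)
      moreover have "u ! (j + p) = S (a + j + p)" using uS[of "j + p"] j nD pD by (simp add: add.commute add.left_commute)
      ultimately show "S (a + j) = S (a + j + p)" by simp
    qed
    have U2: "S (a + c + p - 1) \<noteq> S (a + c - 1)"
    proof -
      have c1: "1 \<le> c" using nD n3 pD p1 cb by linarith
      have "u ! (c + p - 1) \<noteq> u ! ((c + p - 1) mod p)" using uB(8) by simp
      moreover have "(c + p - 1) mod p = (c - 1) mod p"
      proof -
        have "c + p - 1 = (c - 1) + p" using c1 by simp
        then show ?thesis by simp
      qed
      moreover have "u ! (c - 1) = u ! ((c - 1) mod p)"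
      proof -
        have "c - 1 < c + p - 1" using p1 c1 by linarith
        then show ?thesis by (rule uper)
      qed
      moreover have "u ! (c + p - 1) = S (a + c + p - 1)" using uS[of "c + p - 1"] nD pD c1 p1
        by (simp add: algebra_simps)
      moreover have "u ! (c - 1) = S (a + c - 1)" using uS[of "c - 1"] nD pD c1 p1
        by (simp add: algebra_simps)
      ultimately show ?thesis by simp
    qed
    have prim: "\<And>g. 0 < g \<Longrightarrow> g < D \<Longrightarrow> g dvd D \<Longrightarrow> \<exists>i<D. S i \<noteq> S (i mod g)"
    proof (rule ccontr)
      fix g assume g0: "0 < g" and gD: "g < D" and gd: "g dvd D" and no: "\<not> (\<exists>i<D. S i \<noteq> S (i mod g))"
      have smod: "\<And>i. i < D \<Longrightarrow> s ! i = s ! (i mod g)"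
      proof -
        fix i assume i: "i < D"
        have m: "i mod g < D" using i mod_less_eq_dividend[of i g] by linarith
        have e: "S i = S (i mod g)" using no i by blast
        have "i < n" "i mod g < n" using i m nD by linarith+
        then show "s ! i = s ! (i mod g)" using e unfolding S_def by simp
      qed
      have "D \<le> length s" using ls nD by simp
      then have "periodic (take D s)" using periodic_of_mod[OF g0 gD gd _ smod] by blast
      then show False using sB(6) unfolding aperiodic_def by simp
    qed
    have a1: "1 \<le> a" unfolding a_def using assms(6) by simp
    have an: "a < n" unfolding a_def using assms(5,6) by simp
    have "a + p = n"
      using core[where S=S and n=n and c=c and D=D and p=p and a=a, OF n3 nD p1 pD cb a1 an per S1 S2 U1 U2 prim] by simp
    then show ?thesis unfolding a_def p_def using assms(6) by linarith
  qed
qed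

end
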